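(* Let $\xi_0,\xi_1,\dots$ be nondegenerate i.i.d. complex random variables with $\mathbb{P}(\xi_0=0)=0$ and $\mathbb{E}\log(1+|\xi_0|)<\infty$, and let $K_n(z)=\sum_{k=0}^n\xi_kz^k$. Fix a positive integer $m$, let $N_n=n-m$ (so $D_n=m$ for all $n$), and let $\mu^K_{D_n}$ be the counting measure of zeros of $K_n^{(N_n)}$. Then $\frac{1}{m}\mu^K_{D_n}\to\delta_0$ in probability, and $$\mathcal{S}_n(\mu^K_{D_n})\to\mu_{f_m^K}\quad\text{in distribution},$$ where $\mu_{f_m^K}$ is the random counting measure of zeros of the random polynomial $f_m^K(z)=\sum_{k=0}^m\frac{\xi_k}{k!}z^k$.
   Context: For a polynomial $f$, $\mu_f=\sum_{z:\,f(z)=0}\delta_z$ is the counting measure of its zeros (with multiplicity). For $h>0$ and a measure $\nu$ on $\mathbb{C}$, $(\mathcal{S}_h\nu)(B)=\nu(B/h)$ for Borel $B$ (so $\mathcal{S}_n(\mu^K_{D_n})$ is the zero counting measure of $K_n^{(N_n)}(z/n)$). Convergence of random measures in probability (resp. in distribution) means that $\int\phi\,d\nu_n\to\int\phi\,d\nu$ in probability (resp. in distribution) for every smooth compactly supported test function $\phi$ on $\mathbb{C}$. *)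

theory Defs
  imports "HOL-Probability.Probability" "HOL-Computational_Algebra.Polynomial"
begin

fun pderivs :: "complex list \<Rightarrow> (complex \<Rightarrow> real) \<Rightarrow> complex \<Rightarrow> real" where
  "pderivs [] f = f"
| "pderivs (v # vs) f = (\<lambda>x. deriv (\<lambda>t::real. pderivs vs f (x + of_real t * v)) 0)"

definition smooth_fun :: "(complex \<Rightarrow> real) \<Rightarrow> bool" where
  "smooth_fun f \<longleftrightarrow>
     (\<forall>vs. set vs \<subseteq> {1, \<i>} \<longrightarrow>
        continuous_on UNIV (pderivs vs f) \<and>
        (\<forall>v\<in>{1, \<i>}. \<forall>x. (\<lambda>t::real. pderivs vs f (x + of_real t * v)) differentiable (at 0)))"

definition test_fun :: "(complex \<Rightarrow> real) \<Rightarrow> bool" where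
  "test_fun f \<longleftrightarrow> smooth_fun f \<and> compact (closure {z. f z \<noteq> 0})"

text \<open>Integral of phi against the zero counting measure (with multiplicity) of p.\<close>
definition zero_integral :: "complex poly \<Rightarrow> (complex \<Rightarrow> real) \<Rightarrow> real" where
  "zero_integral p \<phi> = (\<Sum>z | poly p z = 0. real (order z p) * \<phi> z)"

definition Kpoly :: "(nat \<Rightarrow> complex) \<Rightarrow> nat \<Rightarrow> complex poly" where
  "Kpoly a n = (\<Sum>k\<le>n. monom (a k) k)"

definition fpoly :: "(nat \<Rightarrow> complex) \<Rightarrow> nat \<Rightarrow> complex poly" where
  "fpoly a m = (\<Sum>k\<le>m. monom (a k / fact k) k)"

end

theory Submission
  imports Defs "HOL-Analysis.Function_Metric" "HOL-Computational_Algebra.Fundamental_Theorem_Algebra"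
    "HOL-Real_Asymp.Real_Asymp"
begin

lemma sum_mset_count_real:
  "(\<Sum>x\<in>#M. f x) = (\<Sum>x\<in>set_mset M. real (count M x) * (f x :: real))"
proof (induction M)
  case empty
  then show ?case by simp
next
  case (add a M)
  have fin: "finite (set_mset M)" by simp
  have "(\<Sum>x\<in>set_mset (add_mset a M). real (count (add_mset a M) x) * f x)
      = (\<Sum>x\<in>insert a (set_mset M). real (count M x) * f x + (if x = a then f x else 0))"
    by (intro sum.cong) (auto simp: algebra_simps)
  also have "\<dots> = (\<Sum>x\<in>insert a (set_mset M). real (count M x) * f x) + f a"
    by (simp add: sum.distrib fin)
  also have "(\<Sum>x\<in>insert a (set_mset M). real (count M x) * f x) = (\<Sum>x\<in>set_mset M. real (count M x) * f x)"
    by (cases "a \<in> set_mset M") (auto simp: fin sum.insert not_in_iff insert_absorb)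
  finally show ?case using add by simp
qed

lemma ZI_zero [simp]: "zero_integral 0 \<psi> = 0"
  by (simp add: zero_integral_def infinite_UNIV_char_0)

lemma ZI_proots: "p \<noteq> 0 \<Longrightarrow> zero_integral p \<psi> = (\<Sum>x\<in>#proots p. \<psi> x)"
  by (simp add: zero_integral_def sum_mset_count_real)

lemma ZI_smult: "c \<noteq> 0 \<Longrightarrow> zero_integral (smult c p) \<psi> = zero_integral p \<psi>"
  by (cases "p = 0") (simp_all add: ZI_proots)

lemma ZI_lin: "q \<noteq> 0 \<Longrightarrow> zero_integral ([:-r,1:] * q) \<psi> = \<psi> r + zero_integral q \<psi>"
proof -
  assume q: "q \<noteq> 0"
  have l: "[:-r,1:] \<noteq> (0::complex poly)" by simp
  have e: "proots ([:-r,1:] * q) = {#r#} + proots q"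
    using proots_mult[OF l q] proots_linear_factor[of "-r"] by simp
  have "zero_integral ([:-r,1:] * q) \<psi> = (\<Sum>x\<in>#proots ([:-r,1:] * q). \<psi> x)"
    by (rule ZI_proots) (metis l q mult_eq_0_iff)
  then show ?thesis unfolding e using q by (simp add: ZI_proots)
qed

lemma ZI_prod: fixes d :: nat shows "a \<noteq> 0 \<Longrightarrow> zero_integral (smult a (\<Prod>i<d. [:-r i,1:])) \<psi> = (\<Sum>i<d. \<psi> (r i))"
proof (induction d)
  case 0
  then show ?case by (simp add: zero_integral_def)
next
  case (Suc d)
  have ne: "(\<Prod>i<d. [:-r i,1:]) \<noteq> (0::complex poly)" by (simp add: prod_zero_iff)
  have eq: "smult a (\<Prod>i<Suc d. [:-r i,1:]) = [:-r d, 1:] * smult a (\<Prod>i<d. [:-r i,1:])"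
    by (simp only: prod.lessThan_Suc mult_smult_right mult.commute)
  have "zero_integral ([:-r d, 1:] * smult a (\<Prod>i<d. [:-r i,1:])) \<psi>
      = \<psi> (r d) + zero_integral (smult a (\<Prod>i<d. [:-r i,1:])) \<psi>"
    by (rule ZI_lin) (use ne Suc.prems in simp)
  then show ?case unfolding eq Suc.IH[OF Suc.prems] by simp
qed

lemma ZI_const: "p \<noteq> 0 \<Longrightarrow> zero_integral p (\<lambda>_. c) = real (degree p) * c"
proof -
  assume "p \<noteq> 0"
  obtain r where r: "smult (lead_coeff p) (\<Prod>i<degree p. [:-r i, 1:]) = p"
    using complex_poly_decompose' by blast
  have "zero_integral p (\<lambda>_. c) = (\<Sum>i<degree p. c)"
    using ZI_prod[where a="lead_coeff p" and d="degree p" and r=r and \<psi>="\<lambda>_. c"] r \<open>p \<noteq> 0\<close> by simp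
  then show ?thesis by simp
qed

lemma prod_smult_lessThan:
  fixes f :: "nat \<Rightarrow> 'a::comm_ring_1 poly"
  shows "(\<Prod>i<d. smult c (f i)) = smult (c ^ d) (\<Prod>i<d. f i)"
  by (induction d) (simp_all add: mult_smult_left mult_smult_right mult.commute mult.left_commute)

lemma ZI_scale:
  assumes "c \<noteq> 0"
  shows "zero_integral (pcompose p [:0, c:]) \<psi> = zero_integral p (\<lambda>z. \<psi> (z / c))"
proof (cases "p = 0")
  case True
  then show ?thesis by simp
next
  case False
  obtain r where r: "smult (lead_coeff p) (\<Prod>i<degree p. [:-r i, 1:]) = p"
    using complex_poly_decompose' by blast
  have lin0: "pcompose [:-r i, 1:] [:0, c:] = [:-r i, c:]" for i
    by (simp add: pcompose_pCons)
  have lin1: "[:-r i, c:] = smult c [:-(r i / c), 1:]" for i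
    using assms by simp
  have "pcompose p [:0, c:] = smult (lead_coeff p) (\<Prod>i<degree p. [:-r i, c:])"
    by (subst r[symmetric]) (simp only: pcompose_smult pcompose_prod lin0)
  also have "\<dots> = smult (lead_coeff p) (\<Prod>i<degree p. smult c [:-(r i / c), 1:])"
    by (simp only: lin1)
  also have "\<dots> = smult (lead_coeff p * c ^ degree p) (\<Prod>i<degree p. [:-(r i / c), 1:])"
    by (simp only: prod_smult_lessThan smult_smult)
  finally have e: "pcompose p [:0, c:] = \<dots>" .
  have "zero_integral (pcompose p [:0, c:]) \<psi> = (\<Sum>i<degree p. \<psi> (r i / c))"
    unfolding e using False assms by (intro ZI_prod) simp
  also have "\<dots> = zero_integral p (\<lambda>z. \<psi> (z / c))"
    using ZI_prod[where a="lead_coeff p" and d="degree p" and r=r and \<psi>="\<lambda>z. \<psi> (z / c)"] r False by simp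
  finally show ?thesis .
qed

lemma subseq_principle:
  fixes x :: "nat \<Rightarrow> real"
  assumes "\<And>\<sigma>::nat\<Rightarrow>nat. strict_mono \<sigma> \<Longrightarrow> \<exists>\<sigma>'. strict_mono \<sigma>' \<and> (x \<circ> \<sigma> \<circ> \<sigma>') \<longlonglongrightarrow> L"
  shows "x \<longlonglongrightarrow> L"
proof (rule ccontr)
  assume "\<not> x \<longlonglongrightarrow> L"
  then obtain e where e: "e > 0" "\<not> eventually (\<lambda>n. dist (x n) L < e) sequentially"
    unfolding tendsto_iff by blast
  then have "frequently (\<lambda>n. \<not> dist (x n) L < e) sequentially"
    by (simp add: not_eventually)
  then have inf: "infinite {n. \<not> dist (x n) L < e}"
    by (simp add: frequently_cofinite[symmetric] cofinite_eq_sequentially)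
  define \<sigma> where "\<sigma> = enumerate {n. \<not> dist (x n) L < e}"
  have sm: "strict_mono \<sigma>" unfolding \<sigma>_def using inf by (rule strict_mono_enumerate)
  have ins: "\<not> dist (x (\<sigma> n)) L < e" for n
    using enumerate_in_set[OF inf] unfolding \<sigma>_def by blast
  obtain \<sigma>' where "strict_mono \<sigma>'" "(x \<circ> \<sigma> \<circ> \<sigma>') \<longlonglongrightarrow> L" using assms[of \<sigma>] sm by blast
  then have "eventually (\<lambda>n. dist ((x \<circ> \<sigma> \<circ> \<sigma>') n) L < e) sequentially"
    using e(1) tendsto_iff by blast
  then obtain n where "dist ((x \<circ> \<sigma> \<circ> \<sigma>') n) L < e" by (meson eventually_sequentially order.refl)
  then show False using ins by simp
qed

lemma poly_sum_le:
  assumes "degree p \<le> D"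
  shows "poly p (x::complex) = (\<Sum>i\<le>D. coeff p i * x ^ i)"
proof -
  have "poly p x = (\<Sum>i\<le>degree p. coeff p i * x ^ i)" by (rule poly_altdef)
  also have "\<dots> = (\<Sum>i\<le>D. coeff p i * x ^ i)"
    using assms by (intro sum.mono_neutral_left) (auto simp: coeff_eq_0)
  finally show ?thesis .
qed

lemma poly_tendsto:
  fixes p :: "nat \<Rightarrow> complex poly"
  assumes "\<And>k. (\<lambda>n. coeff (p n) k) \<longlonglongrightarrow> coeff q k" "\<And>n. degree (p n) \<le> D" "degree q \<le> D"
    "z \<longlonglongrightarrow> w"
  shows "(\<lambda>n. poly (p n) (z n)) \<longlonglongrightarrow> poly q w"
proof -
  have "(\<lambda>n. (\<Sum>i\<le>D. coeff (p n) i * z n ^ i)) \<longlonglongrightarrow> (\<Sum>i\<le>D. coeff q i * w ^ i)"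
    by (intro tendsto_intros assms)
  then show ?thesis using assms(2,3) by (simp add: poly_sum_le[of _ D])
qed

lemma root_bound:
  fixes p :: "complex poly"
  assumes "poly p r = 0" "degree p = Suc d"
  shows "norm r \<le> 1 + (\<Sum>k\<le>d. norm (coeff p k)) / norm (lead_coeff p)"
proof (cases "norm r \<le> 1")
  case True
  have "0 \<le> (\<Sum>k\<le>d. norm (coeff p k)) / norm (lead_coeff p)" by (simp add: sum_nonneg)
  then show ?thesis using True by linarith
next
  case False
  have p0: "p \<noteq> 0" using assms by auto
  have lc: "norm (lead_coeff p) > 0" using p0 by simp
  have "0 = (\<Sum>i\<le>Suc d. coeff p i * r ^ i)" using assms poly_altdef[of p r] by simp
  then have "lead_coeff p * r ^ Suc d = - (\<Sum>i\<le>d. coeff p i * r ^ i)"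
    using assms(2) by (simp add: add_eq_0_iff)
  then have "norm (lead_coeff p) * norm r ^ Suc d = norm (\<Sum>i\<le>d. coeff p i * r ^ i)"
    by (metis norm_minus_cancel norm_mult norm_power)
  also have "\<dots> \<le> (\<Sum>i\<le>d. norm (coeff p i) * norm r ^ i)"
    by (rule order.trans[OF norm_sum]) (simp add: norm_mult norm_power)
  also have "\<dots> \<le> (\<Sum>i\<le>d. norm (coeff p i) * norm r ^ d)"
    using False by (intro sum_mono mult_left_mono power_increasing) auto
  also have "\<dots> = (\<Sum>i\<le>d. norm (coeff p i)) * norm r ^ d" by (simp add: sum_distrib_right)
  finally have "norm (lead_coeff p) * norm r * norm r ^ d \<le> (\<Sum>i\<le>d. norm (coeff p i)) * norm r ^ d"
    by (simp add: mult.assoc)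
  moreover have "0 < norm r ^ d" using False by (intro zero_less_power) linarith
  ultimately have "norm (lead_coeff p) * norm r \<le> (\<Sum>i\<le>d. norm (coeff p i))"
    by (simp add: mult_le_cancel_right)
  then have "norm r \<le> (\<Sum>k\<le>d. norm (coeff p k)) / norm (lead_coeff p)"
    using lc by (simp add: field_simps)
  then show ?thesis by linarith
qed

lemma ZI_deg0: "degree p = 0 \<Longrightarrow> zero_integral p \<psi> = 0"
proof (cases "p = 0")
  case False
  assume "degree p = 0"
  then show ?thesis using False by (auto simp: zero_integral_def elim!: degree_eq_zeroE)
qed simp

lemma ZI_conv:
  fixes p :: "nat \<Rightarrow> complex poly" and q :: "complex poly"
    and \<psi> :: "nat \<Rightarrow> complex \<Rightarrow> real" and \<psi>0 :: "complex \<Rightarrow> real"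
  assumes "\<And>n. degree (p n) = d" "degree q = d" "q \<noteq> 0"
    "\<And>k. (\<lambda>n. coeff (p n) k) \<longlonglongrightarrow> coeff q k"
    "\<And>\<sigma> z w. strict_mono (\<sigma>::nat\<Rightarrow>nat) \<Longrightarrow> z \<longlonglongrightarrow> w \<Longrightarrow> (\<lambda>n. \<psi> (\<sigma> n) (z n)) \<longlonglongrightarrow> \<psi>0 w"
  shows "(\<lambda>n. zero_integral (p n) (\<psi> n)) \<longlonglongrightarrow> zero_integral q \<psi>0"
  using assms
proof (induction d arbitrary: p q \<psi> \<psi>0)
  case 0
  then show ?case by (simp add: ZI_deg0)
next
  case (Suc d)
  show ?case
  proof (rule subseq_principle)
    fix \<sigma>0 :: "nat \<Rightarrow> nat" assume \<sigma>0: "strict_mono \<sigma>0"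
    define P where "P = (\<lambda>n. p (\<sigma>0 n))"
    have degP: "degree (P n) = Suc d" for n using Suc.prems(1) by (simp add: P_def)
    have P0: "P n \<noteq> 0" for n using degP[of n] by auto
    have coefP: "(\<lambda>n. coeff (P n) k) \<longlonglongrightarrow> coeff q k" for k
      unfolding P_def using LIMSEQ_subseq_LIMSEQ[OF Suc.prems(4) \<sigma>0] by (simp add: o_def)
    have "\<forall>n. \<exists>z. poly (P n) z = 0"
    proof
      fix n show "\<exists>z. poly (P n) z = 0"
        using degP[of n] by (intro fundamental_theorem_of_algebra) (simp add: constant_degree)
    qed
    then obtain r where r: "\<And>n. poly (P n) (r n) = 0" by metis
    define B where "B = (\<lambda>n. 1 + (\<Sum>k\<le>d. norm (coeff (P n) k)) / norm (lead_coeff (P n)))"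
    have lead: "(\<lambda>n. lead_coeff (P n)) \<longlonglongrightarrow> lead_coeff q"
      using coefP[of "Suc d"] degP Suc.prems(2) by simp
    have "B \<longlonglongrightarrow> 1 + (\<Sum>k\<le>d. norm (coeff q k)) / norm (lead_coeff q)"
      unfolding B_def using Suc.prems(3) by (intro tendsto_intros coefP lead) simp
    then have "bounded (range B)" by (rule convergent_imp_bounded)
    then obtain a where a: "\<And>n. norm (B n) \<le> a" unfolding bounded_iff by blast
    have "norm (r n) \<le> a" for n
      using root_bound[OF r degP, of n] a[of n] unfolding B_def by auto
    then have bdd: "bounded (range r)" unfolding bounded_iff by blast
    obtain s \<sigma>1 where \<sigma>1: "strict_mono \<sigma>1" "(r \<circ> \<sigma>1) \<longlonglongrightarrow> s"
      using bounded_imp_convergent_subsequence[OF bdd] by blast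
    have "(\<lambda>n. poly (P (\<sigma>1 n)) ((r \<circ> \<sigma>1) n)) \<longlonglongrightarrow> poly q s"
      by (rule poly_tendsto[where D="Suc d"])
        (use \<sigma>1 LIMSEQ_subseq_LIMSEQ[OF coefP \<sigma>1(1)] degP Suc.prems(2) in \<open>auto simp: o_def\<close>)
    then have qs: "poly q s = 0" using r by (simp add: LIMSEQ_const_iff)
    define Q where "Q = (\<lambda>n. synthetic_div (P (\<sigma>1 n)) (r (\<sigma>1 n)))"
    define Q0 where "Q0 = synthetic_div q s"
    have PQ: "P (\<sigma>1 n) = [:-r (\<sigma>1 n),1:] * Q n" for n
      using synthetic_div_correct'[of "r (\<sigma>1 n)" "P (\<sigma>1 n)"] r by (simp add: Q_def)
    have qQ: "q = [:-s,1:] * Q0"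
      using synthetic_div_correct'[of s q] qs by (simp add: Q0_def)
    have degQ: "degree (Q n) = d" for n by (simp add: Q_def degree_synthetic_div degP)
    have degQ0: "degree Q0 = d" by (simp add: Q0_def degree_synthetic_div Suc.prems(2))
    have Q00: "Q0 \<noteq> 0" using qQ Suc.prems(3) by auto
    have Qn0: "Q n \<noteq> 0" for n using PQ[of n] P0[of "\<sigma>1 n"] by auto
    have rec: "coeff (Q n) k = coeff (P (\<sigma>1 n)) (Suc k) + r (\<sigma>1 n) * coeff (Q n) (Suc k)" for n k
      by (subst PQ) simp
    have rec0: "coeff Q0 k = coeff q (Suc k) + s * coeff Q0 (Suc k)" for k
    proof -
      have "coeff ([:-s,1:] * Q0) (Suc k) = coeff Q0 k - s * coeff Q0 (Suc k)" by simp
      then show ?thesis using qQ by simp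
    qed
    have coefP1: "(\<lambda>n. coeff (P (\<sigma>1 n)) k) \<longlonglongrightarrow> coeff q k" for k
      using LIMSEQ_subseq_LIMSEQ[OF coefP \<sigma>1(1)] by (simp add: o_def)
    have rs: "(\<lambda>n. r (\<sigma>1 n)) \<longlonglongrightarrow> s" using \<sigma>1(2) by (simp add: o_def)
    have conv: "\<forall>k \<ge> Suc d - i. (\<lambda>n. coeff (Q n) k) \<longlonglongrightarrow> coeff Q0 k" for i
    proof (induction i)
      case 0
      show ?case
      proof (intro allI impI)
        fix k assume "Suc d - 0 \<le> k"
        then have "coeff (Q n) k = 0" "coeff Q0 k = 0" for n
          using degQ degQ0 by (auto intro!: coeff_eq_0)
        then show "(\<lambda>n. coeff (Q n) k) \<longlonglongrightarrow> coeff Q0 k" by simp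
      qed
    next
      case (Suc i)
      show ?case
      proof (intro allI impI)
        fix k assume k: "Suc d - Suc i \<le> k"
        show "(\<lambda>n. coeff (Q n) k) \<longlonglongrightarrow> coeff Q0 k"
        proof (cases "Suc d - i \<le> k")
          case True
          then show ?thesis using Suc.IH by blast
        next
          case False
          then have "Suc d - i \<le> Suc k" using k by arith
          then have "(\<lambda>n. coeff (Q n) (Suc k)) \<longlonglongrightarrow> coeff Q0 (Suc k)" using Suc.IH by blast
          then have "(\<lambda>n. coeff (P (\<sigma>1 n)) (Suc k) + r (\<sigma>1 n) * coeff (Q n) (Suc k))
              \<longlonglongrightarrow> coeff q (Suc k) + s * coeff Q0 (Suc k)"
            by (intro tendsto_intros coefP1 rs)
          then show ?thesis by (simp only: rec[symmetric] rec0[symmetric])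
        qed
      qed
    qed
    have coefQ: "(\<lambda>n. coeff (Q n) k) \<longlonglongrightarrow> coeff Q0 k" for k using conv[of "Suc d"] by auto
    define \<psi>' where "\<psi>' = (\<lambda>n. \<psi> (\<sigma>0 (\<sigma>1 n)))"
    have hyp: "(\<lambda>n. \<psi>' (\<tau> n) (z n)) \<longlonglongrightarrow> \<psi>0 w" if "strict_mono (\<tau>::nat\<Rightarrow>nat)" "z \<longlonglongrightarrow> w" for \<tau> z w
      using Suc.prems(5)[of "\<sigma>0 \<circ> \<sigma>1 \<circ> \<tau>" z w] strict_mono_o[OF strict_mono_o[OF \<sigma>0 \<sigma>1(1)] that(1)] that(2)
      by (simp add: \<psi>'_def o_def)
    have IH: "(\<lambda>n. zero_integral (Q n) (\<psi>' n)) \<longlonglongrightarrow> zero_integral Q0 \<psi>0"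
      by (rule Suc.IH) (use degQ degQ0 Q00 coefQ hyp in auto)
    have hr: "(\<lambda>n. \<psi>' n (r (\<sigma>1 n))) \<longlonglongrightarrow> \<psi>0 s"
      using Suc.prems(5)[of "\<sigma>0 \<circ> \<sigma>1" "r \<circ> \<sigma>1" s] strict_mono_o[OF \<sigma>0 \<sigma>1(1)] \<sigma>1(2)
      by (simp add: \<psi>'_def o_def)
    have lim: "(\<lambda>n. \<psi>' n (r (\<sigma>1 n)) + zero_integral (Q n) (\<psi>' n)) \<longlonglongrightarrow> \<psi>0 s + zero_integral Q0 \<psi>0"
      by (intro tendsto_add hr IH)
    have e1: "zero_integral q \<psi>0 = \<psi>0 s + zero_integral Q0 \<psi>0" using qQ ZI_lin Q00 by metis
    have e2: "(\<lambda>n. zero_integral (p n) (\<psi> n)) \<circ> \<sigma>0 \<circ> \<sigma>1 = (\<lambda>n. \<psi>' n (r (\<sigma>1 n)) + zero_integral (Q n) (\<psi>' n))"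
    proof
      fix n
      have "zero_integral (P (\<sigma>1 n)) (\<psi>' n) = \<psi>' n (r (\<sigma>1 n)) + zero_integral (Q n) (\<psi>' n)"
        by (subst PQ) (rule ZI_lin[OF Qn0])
      then show "((\<lambda>n. zero_integral (p n) (\<psi> n)) \<circ> \<sigma>0 \<circ> \<sigma>1) n = \<psi>' n (r (\<sigma>1 n)) + zero_integral (Q n) (\<psi>' n)"
        by (simp add: P_def \<psi>'_def)
    qed
    show "\<exists>\<sigma>'. strict_mono \<sigma>' \<and> ((\<lambda>n. zero_integral (p n) (\<psi> n)) \<circ> \<sigma>0 \<circ> \<sigma>') \<longlonglongrightarrow> zero_integral q \<psi>0"
      using \<sigma>1(1) lim e1 e2 by metis
  qed
qed

definition cpoly :: "nat \<Rightarrow> (nat \<Rightarrow> complex) \<Rightarrow> complex poly" where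
  "cpoly m b = (\<Sum>j\<le>m. monom (b j) j)"

lemma coeff_cpoly: "coeff (cpoly m b) k = (if k \<le> m then b k else 0)"
  by (simp add: cpoly_def coeff_sum coeff_monom)

lemma degree_cpoly_le: "degree (cpoly m b) \<le> m"
  by (rule degree_le) (simp add: coeff_cpoly)

lemma degree_cpoly: "b m \<noteq> 0 \<Longrightarrow> degree (cpoly m b) = m"
  by (intro antisym degree_cpoly_le le_degree) (simp add: coeff_cpoly)

lemma cpoly_ne0: "b m \<noteq> 0 \<Longrightarrow> cpoly m b \<noteq> 0"
  using coeff_cpoly[of m b m] by auto

lemma Kpoly_cpoly: "Kpoly a n = cpoly n a"
  by (simp add: Kpoly_def cpoly_def)

lemma fpoly_cpoly: "fpoly a m = cpoly m (\<lambda>k. a k / fact k)"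
  by (simp add: fpoly_def cpoly_def)

lemma cpoly_cong: "(\<And>j. j \<le> m \<Longrightarrow> b j = b' j) \<Longrightarrow> cpoly m b = cpoly m b'"
  by (simp add: cpoly_def)

lemma coeff_pderiv_funpow:
  "coeff ((pderiv ^^ t) p) j = (fact (t + j) / fact j) * coeff p (t + j)" for p :: "complex poly"
proof (induction t arbitrary: j)
  case 0
  then show ?case by simp
next
  case (Suc t)
  have "coeff ((pderiv ^^ Suc t) p) j = of_nat (Suc j) * coeff ((pderiv ^^ t) p) (Suc j)"
    by (simp add: coeff_pderiv)
  also have "\<dots> = of_nat (Suc j) * ((fact (t + Suc j) / fact (Suc j)) * coeff p (t + Suc j))"
    by (simp add: Suc)
  also have "\<dots> = (fact (Suc t + j) / fact j) * coeff p (Suc t + j)"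
  proof -
    have aux: "(x::complex) \<noteq> 0 \<Longrightarrow> x * (A / (x * B) * c) = A / B * c" for x A B c
      by (cases "B = 0") (simp_all add: field_simps)
    have f: "(fact (Suc j)::complex) = of_nat (Suc j) * fact j" by (rule fact_Suc)
    have nz: "(of_nat (Suc j)::complex) \<noteq> 0" by (rule of_nat_neq_0)
    have "t + Suc j = Suc t + j" by simp
    then show ?thesis unfolding f using aux[OF nz] by metis
  qed
  finally show ?case .
qed

definition Cf :: "nat \<Rightarrow> nat \<Rightarrow> nat \<Rightarrow> complex" where
  "Cf m t j = fact (t + j) / (fact t * fact j * of_nat (t + m) ^ j)"

lemma key_scale:
  assumes "m > 0"
  shows "zero_integral ((pderiv ^^ t) (Kpoly a (t + m))) (\<lambda>z. g (of_nat (t + m) * z))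
       = zero_integral (cpoly m (\<lambda>j. a (t + j) * Cf m t j)) g"
proof -
  define D where "D = (pderiv ^^ t) (Kpoly a (t + m))"
  define n :: complex where "n = of_nat (t + m)"
  have n0: "n \<noteq> 0" using assms of_nat_eq_0_iff[of "t+m"] unfolding n_def by (auto simp del: of_nat_add)
  have eq: "cpoly m (\<lambda>j. a (t + j) * Cf m t j) = smult (1 / fact t) (pcompose D [:0, 1 / n:])"
  proof (rule poly_eqI)
    fix j
    show "coeff (cpoly m (\<lambda>j. a (t + j) * Cf m t j)) j = coeff (smult (1 / fact t) (pcompose D [:0, 1 / n:])) j"
      using n0 by (simp add: coeff_cpoly coeff_pcompose_linear D_def coeff_pderiv_funpow Kpoly_cpoly
            Cf_def n_def power_divide field_simps)
  qed
  have "zero_integral (cpoly m (\<lambda>j. a (t + j) * Cf m t j)) g = zero_integral (pcompose D [:0, 1 / n:]) g"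
    unfolding eq by (rule ZI_smult) simp
  also have "\<dots> = zero_integral D (\<lambda>z. g (z / (1 / n)))"
    using n0 by (intro ZI_scale) simp
  finally show ?thesis by (simp add: D_def n_def mult.commute)
qed

lemma ratio_lim: "(\<lambda>t. of_nat (t + k) / of_nat (t + m) :: complex) \<longlonglongrightarrow> 1"
proof -
  have "(\<lambda>t. real (t + k) / real (t + m)) \<longlonglongrightarrow> 1" by real_asymp
  then have "(\<lambda>t. complex_of_real (real (t + k) / real (t + m))) \<longlonglongrightarrow> of_real 1"
    by (rule tendsto_of_real)
  then show ?thesis by simp
qed

lemma Cf_lim: "(\<lambda>t. Cf m t j) \<longlonglongrightarrow> 1 / fact j"
proof -
  define L where "L = (\<lambda>j t. fact (t + j) / (fact t * of_nat (t + m) ^ j) :: complex)"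
  have "(\<lambda>t. L j t) \<longlonglongrightarrow> 1" for j
  proof (induction j)
    case 0
    then show ?case by (simp add: L_def)
  next
    case (Suc j)
    have "(\<lambda>t. L j t * (of_nat (t + Suc j) / of_nat (t + m))) \<longlonglongrightarrow> 1 * 1"
      by (intro tendsto_mult Suc ratio_lim)
    moreover have "L j t * (of_nat (t + Suc j) / of_nat (t + m)) = L (Suc j) t" for t
      by (simp add: L_def field_simps add_Suc_right del: of_nat_Suc)
    ultimately show ?case by simp
  qed
  then have "(\<lambda>t. L j t / fact j) \<longlonglongrightarrow> 1 / fact j" by (intro tendsto_divide) auto
  moreover have "L j t / fact j = Cf m t j" for t by (simp add: L_def Cf_def field_simps)
  ultimately show ?thesis by simp
qed

lemma Cf_ne0: "m > 0 \<Longrightarrow> Cf m t j \<noteq> 0"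
  using of_nat_eq_0_iff[of "t+m"] unfolding Cf_def by (auto simp del: of_nat_add)

lemma coord_tendsto:
  fixes u :: "nat \<Rightarrow> nat \<Rightarrow> complex"
  assumes "u \<longlonglongrightarrow> a"
  shows "(\<lambda>n. u n k) \<longlonglongrightarrow> a k"
proof -
  have "isCont (\<lambda>x::nat\<Rightarrow>complex. x k) a"
    by (metis UNIV_I continuous_on_eq_continuous_at continuous_on_product_coordinates open_UNIV)
  then show ?thesis using assms by (rule isCont_tendsto_compose)
qed

lemma cpoly_cont:
  assumes "continuous_on UNIV \<psi>"
  shows "continuous_on {b::nat\<Rightarrow>complex. b m \<noteq> 0} (\<lambda>b. zero_integral (cpoly m b) \<psi>)"
proof (rule continuous_on_sequentiallyI)
  fix u :: "nat \<Rightarrow> nat \<Rightarrow> complex" and a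
  assume u: "\<forall>n. u n \<in> {b. b m \<noteq> 0}" and a: "a \<in> {b. b m \<noteq> 0}" and lim: "u \<longlonglongrightarrow> a"
  have ic: "isCont \<psi> w" for w using assms by (simp add: continuous_on_eq_continuous_at)
  show "(\<lambda>n. zero_integral (cpoly m (u n)) \<psi>) \<longlonglongrightarrow> zero_integral (cpoly m a) \<psi>"
  proof (rule ZI_conv[where d=m])
    show "degree (cpoly m (u n)) = m" for n using u by (simp add: degree_cpoly)
    show "degree (cpoly m a) = m" using a by (simp add: degree_cpoly)
    show "cpoly m a \<noteq> 0" using a by (simp add: cpoly_ne0)
    show "(\<lambda>n. coeff (cpoly m (u n)) k) \<longlonglongrightarrow> coeff (cpoly m a) k" for k
      using coord_tendsto[OF lim, of k] by (simp add: coeff_cpoly)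
    show "(\<lambda>n. \<psi> (z n)) \<longlonglongrightarrow> \<psi> w" if "z \<longlonglongrightarrow> w" for z w
      using ic that by (rule isCont_tendsto_compose)
  qed
qed

lemma open_coord_ne0: "open {b::nat\<Rightarrow>complex. b k \<noteq> 0}"
  by (rule open_Collect_neq) (simp_all add: continuous_on_const)

lemma cpoly_meas:
  assumes "continuous_on UNIV \<psi>"
  shows "(\<lambda>b. zero_integral (cpoly m b) \<psi>) \<in> borel_measurable (borel :: (nat\<Rightarrow>complex) measure)"
proof (induction m)
  case 0
  have "degree (cpoly 0 b) = 0" for b using degree_cpoly_le[of 0 b] by simp
  then show ?case by (simp add: ZI_deg0)
next
  case (Suc m)
  define A where "A = {b::nat\<Rightarrow>complex. b (Suc m) \<noteq> 0}"
  have Ab: "A \<in> sets borel" unfolding A_def by (intro borel_open open_coord_ne0)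
  have eq: "zero_integral (cpoly (Suc m) b) \<psi> =
      indicator A b *\<^sub>R zero_integral (cpoly (Suc m) b) \<psi> + indicator (-A) b *\<^sub>R zero_integral (cpoly m b) \<psi>" for b
  proof (cases "b \<in> A")
    case False
    then have "cpoly (Suc m) b = cpoly m b"
      by (intro poly_eqI) (auto simp: coeff_cpoly A_def le_Suc_eq)
    then show ?thesis using False by simp
  qed simp
  have m1: "(\<lambda>b. indicator A b *\<^sub>R zero_integral (cpoly (Suc m) b) \<psi>) \<in> borel_measurable borel"
    by (rule borel_measurable_continuous_on_indicator[OF Ab]) (unfold A_def, rule cpoly_cont[OF assms])
  have m2: "(\<lambda>b. indicator (-A) b *\<^sub>R zero_integral (cpoly m b) \<psi>) \<in> borel_measurable borel"
    using Suc.IH Ab by (intro borel_measurable_scaleR borel_measurable_indicator) auto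
  show ?case by (subst eq) (intro borel_measurable_add m1 m2)
qed

lemma as_to_prob:
  fixes Y :: "nat \<Rightarrow> 'a \<Rightarrow> real"
  assumes "prob_space M" "\<And>t. Y t \<in> borel_measurable M" "AE \<omega> in M. (\<lambda>t. Y t \<omega>) \<longlonglongrightarrow> c" "\<epsilon> > 0"
  shows "(\<lambda>t. measure M {\<omega>\<in>space M. \<bar>Y t \<omega> - c\<bar> > \<epsilon>}) \<longlonglongrightarrow> 0"
proof -
  interpret prob_space M by fact
  define S where "S = (\<lambda>t. {\<omega>\<in>space M. \<bar>Y t \<omega> - c\<bar> > \<epsilon>})"
  have [measurable]: "Y t \<in> borel_measurable M" for t by (rule assms(2))
  have fm: "(\<lambda>\<omega>. \<bar>Y t \<omega> - c\<bar>) \<in> borel_measurable M" for t by measurable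
  have Se: "S t = (\<lambda>\<omega>. \<bar>Y t \<omega> - c\<bar>) -` {\<epsilon><..} \<inter> space M" for t by (auto simp: S_def)
  have Ss: "S t \<in> sets M" for t unfolding Se by (rule measurable_sets[OF fm]) simp
  have "(\<lambda>t. integral\<^sup>L M (indicator (S t) :: 'a \<Rightarrow> real)) \<longlonglongrightarrow> integral\<^sup>L M (\<lambda>_. 0::real)"
  proof (rule integral_dominated_convergence[where w="\<lambda>_. 1"])
    show "(\<lambda>_. 0::real) \<in> borel_measurable M" by simp
    show "indicator (S t) \<in> borel_measurable M" for t using Ss by simp
    show "integrable M (\<lambda>_. 1::real)" by simp
    show "AE x in M. (\<lambda>t. indicator (S t) x :: real) \<longlonglongrightarrow> 0"
      using assms(3)
    proof eventually_elim
      case (elim x)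
      then have "eventually (\<lambda>t. \<bar>Y t x - c\<bar> < \<epsilon>) sequentially"
        using assms(4) by (simp add: tendsto_iff dist_real_def)
      then have "eventually (\<lambda>t. indicator (S t) x = (0::real)) sequentially"
        by eventually_elim (auto simp: S_def indicator_def)
      then show ?case by (rule tendsto_eventually)
    qed
    show "AE x in M. norm (indicator (S t) x :: real) \<le> 1" for t
      by (auto simp: indicator_def)
  qed
  then show ?thesis using Ss by (simp add: S_def)
qed

lemma as_to_weak:
  fixes Y :: "nat \<Rightarrow> 'a \<Rightarrow> real"
  assumes "prob_space M" "\<And>t. Y t \<in> borel_measurable M" "Z \<in> borel_measurable M"
    "AE \<omega> in M. (\<lambda>t. Y t \<omega>) \<longlonglongrightarrow> Z \<omega>"
  shows "weak_conv_m (\<lambda>t. distr M borel (Y t)) (distr M borel Z)"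
proof -
  interpret prob_space M by fact
  show ?thesis
  proof (rule integral_bdd_continuous_conv_imp_weak_conv)
    show "real_distribution (distr M borel (Y t))" for t using assms(2) by simp
    show "real_distribution (distr M borel Z)" using assms(3) by simp
    fix f :: "real \<Rightarrow> real"
    assume cf: "\<And>x. isCont f x" and bf: "\<And>x. \<bar>f x\<bar> \<le> 1"
    have fm: "f \<in> borel_measurable borel"
      using cf by (intro borel_measurable_continuous_onI continuous_at_imp_continuous_on) auto
    have "(\<lambda>t. integral\<^sup>L M (\<lambda>x. f (Y t x))) \<longlonglongrightarrow> integral\<^sup>L M (\<lambda>x. f (Z x))"
    proof (rule integral_dominated_convergence[where w="\<lambda>_. 1"])
      show "(\<lambda>x. f (Z x)) \<in> borel_measurable M" using fm assms(3) by measurable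
      show "(\<lambda>x. f (Y t x)) \<in> borel_measurable M" for t using fm assms(2)[of t] by measurable
      show "integrable M (\<lambda>_. 1::real)" by simp
      show "AE x in M. (\<lambda>t. f (Y t x)) \<longlonglongrightarrow> f (Z x)"
        using assms(4) by eventually_elim (rule isCont_tendsto_compose[OF cf])
      show "AE x in M. norm (f (Y t x)) \<le> 1" for t using bf by simp
    qed
    then show "(\<lambda>t. integral\<^sup>L (distr M borel (Y t)) f) \<longlonglongrightarrow> integral\<^sup>L (distr M borel Z) f"
      using assms(2,3) fm by (simp add: integral_distr)
  qed
qed

lemma shift_law:
  fixes \<xi> :: "nat \<Rightarrow> 'a \<Rightarrow> complex"
  assumes "prob_space M" "\<And>k. \<xi> k \<in> borel_measurable M"
    "prob_space.indep_vars M (\<lambda>_. borel) \<xi> UNIV"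
    "\<And>k. distr M borel (\<xi> k) = distr M borel (\<xi> 0)"
  shows "distr M borel (\<lambda>\<omega>. (\<lambda>j. \<xi> (t + j) \<omega>)) = distr M borel (\<lambda>\<omega>. (\<lambda>j. \<xi> j \<omega>))"
proof -
  interpret prob_space M by fact
  define D where "D = distr M borel (\<xi> 0)"
  define P where "P = (Pi\<^sub>M UNIV (\<lambda>_. borel) :: (nat \<Rightarrow> complex) measure)"
  have pD: "prob_space D" unfolding D_def using assms(2) by (intro prob_space_distr) auto
  have sD: "sets D = sets borel" by (simp add: D_def)
  have W0m: "(\<lambda>\<omega>. (\<lambda>j. \<xi> j \<omega>)) \<in> measurable M P"
    unfolding P_def using assms(2) by (intro measurable_PiM_single') auto
  have Wtm: "(\<lambda>\<omega>. (\<lambda>j. \<xi> (t + j) \<omega>)) \<in> measurable M P"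
    unfolding P_def using assms(2) by (intro measurable_PiM_single') auto
  have Sm: "(\<lambda>x. (\<lambda>n. x (t + n))) \<in> measurable P P"
    unfolding P_def by (intro measurable_PiM_single') (auto intro: measurable_component_singleton)
  have h0: "distr M P (\<lambda>\<omega>. (\<lambda>j. \<xi> j \<omega>)) = Pi\<^sub>M UNIV (\<lambda>_. D)"
  proof -
    have "distr M (Pi\<^sub>M UNIV (\<lambda>_. borel)) (\<lambda>x. \<lambda>i\<in>UNIV. \<xi> i x) = (Pi\<^sub>M UNIV (\<lambda>i. distr M borel (\<xi> i)))"
      using assms(3) by (subst indep_vars_iff_distr_eq_PiM[symmetric]) (auto simp: assms(2))
    also have "\<dots> = Pi\<^sub>M UNIV (\<lambda>_. D)" unfolding D_def by (intro PiM_cong refl) (rule assms(4))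
    finally show ?thesis by (simp add: P_def restrict_def)
  qed
  have "distr M P (\<lambda>\<omega>. (\<lambda>j. \<xi> (t + j) \<omega>)) = distr (distr M P (\<lambda>\<omega>. (\<lambda>j. \<xi> j \<omega>))) P (\<lambda>x. (\<lambda>n. x (t + n)))"
    using W0m Sm by (subst distr_distr) (auto simp: o_def)
  also have "\<dots> = distr (Pi\<^sub>M UNIV (\<lambda>_. D)) (Pi\<^sub>M UNIV (\<lambda>_. D)) (\<lambda>\<omega>. \<lambda>n\<in>UNIV. \<omega> (t + n))"
    unfolding h0 by (intro distr_cong) (auto simp: P_def sD intro!: sets_PiM_cong)
  also have "\<dots> = Pi\<^sub>M UNIV (\<lambda>_. D)"
    using distr_PiM_reindex[of UNIV "\<lambda>_. D" "\<lambda>n. t + n" UNIV] pD by (simp add: inj_on_def)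
  also have "\<dots> = distr M P (\<lambda>\<omega>. (\<lambda>j. \<xi> j \<omega>))" by (rule h0[symmetric])
  finally have eq: "distr M P (\<lambda>\<omega>. (\<lambda>j. \<xi> (t + j) \<omega>)) = distr M P (\<lambda>\<omega>. (\<lambda>j. \<xi> j \<omega>))" .
  have sP: "sets P = sets (borel :: (nat \<Rightarrow> complex) measure)" unfolding P_def by (rule sets_PiM_equal_borel)
  have "distr M borel (\<lambda>\<omega>. (\<lambda>j. \<xi> (t + j) \<omega>)) = distr M P (\<lambda>\<omega>. (\<lambda>j. \<xi> (t + j) \<omega>))"
    using sP by (intro distr_cong) auto
  also note eq
  also have "distr M P (\<lambda>\<omega>. (\<lambda>j. \<xi> j \<omega>)) = distr M borel (\<lambda>\<omega>. (\<lambda>j. \<xi> j \<omega>))"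
    using sP by (intro distr_cong) auto
  finally show ?thesis .
qed

lemma Cmeas: "(\<lambda>b::nat\<Rightarrow>complex. \<lambda>j. b j * c j) \<in> borel_measurable borel"
proof -
  have "continuous_on UNIV (\<lambda>b::nat\<Rightarrow>complex. \<lambda>j. b j * c j)"
    by (intro continuous_on_coordinatewise_then_product continuous_on_mult continuous_on_const
        continuous_on_product_coordinates)
  then show ?thesis by (rule borel_measurable_continuous_onI)
qed

lemma H_meas:
  assumes "continuous_on UNIV \<psi>"
  shows "(\<lambda>b::nat\<Rightarrow>complex. zero_integral (cpoly m (\<lambda>j. b j * c j)) \<psi>) \<in> borel_measurable borel"
  using measurable_comp[OF Cmeas[of c] cpoly_meas[OF assms, of m]] by (simp add: o_def)

lemma W_meas:
  fixes \<xi> :: "nat \<Rightarrow> 'a \<Rightarrow> complex"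
  assumes "\<And>k. \<xi> k \<in> borel_measurable M"
  shows "(\<lambda>\<omega>. \<lambda>j. \<xi> (t + j) \<omega>) \<in> borel_measurable M"
  by (rule measurable_coordinatewise_then_product) (simp add: assms)

lemma conv_Y:
  fixes \<psi> :: "nat \<Rightarrow> complex \<Rightarrow> real"
  assumes "b m \<noteq> 0" "m > 0"
    "\<And>\<sigma> z w. strict_mono (\<sigma>::nat\<Rightarrow>nat) \<Longrightarrow> z \<longlonglongrightarrow> w \<Longrightarrow> (\<lambda>n. \<psi> (\<sigma> n) (z n)) \<longlonglongrightarrow> \<psi>0 w"
  shows "(\<lambda>t. zero_integral (cpoly m (\<lambda>j. b j * Cf m t j)) (\<psi> t))
           \<longlonglongrightarrow> zero_integral (cpoly m (\<lambda>j. b j / fact j)) \<psi>0"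
proof (rule ZI_conv[where d=m])
  show "degree (cpoly m (\<lambda>j. b j * Cf m t j)) = m" for t
    using assms(1,2) Cf_ne0 by (intro degree_cpoly) auto
  show "degree (cpoly m (\<lambda>j. b j / fact j)) = m" using assms(1) by (intro degree_cpoly) auto
  show "cpoly m (\<lambda>j. b j / fact j) \<noteq> 0" using assms(1) by (intro cpoly_ne0) auto
  show "(\<lambda>t. coeff (cpoly m (\<lambda>j. b j * Cf m t j)) k) \<longlonglongrightarrow> coeff (cpoly m (\<lambda>j. b j / fact j)) k" for k
  proof -
    have "(\<lambda>t. b k * Cf m t k) \<longlonglongrightarrow> b k * (1 / fact k)" by (intro tendsto_mult_left Cf_lim)
    then show ?thesis by (simp add: coeff_cpoly)
  qed
qed (rule assms(3))

lemma law_eq: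
  fixes \<xi> :: "nat \<Rightarrow> 'a \<Rightarrow> complex" and H :: "(nat \<Rightarrow> complex) \<Rightarrow> real"
  assumes "prob_space M" "\<And>k. \<xi> k \<in> borel_measurable M"
    "prob_space.indep_vars M (\<lambda>_. borel) \<xi> UNIV"
    "\<And>k. distr M borel (\<xi> k) = distr M borel (\<xi> 0)"
    "H \<in> borel_measurable borel"
  shows "distr M borel (\<lambda>\<omega>. H (\<lambda>j. \<xi> (t + j) \<omega>)) = distr M borel (\<lambda>\<omega>. H (\<lambda>j. \<xi> j \<omega>))"
proof -
  have Wt: "(\<lambda>\<omega>. \<lambda>j. \<xi> (t + j) \<omega>) \<in> borel_measurable M" by (rule W_meas[OF assms(2)])
  have W0: "(\<lambda>\<omega>. \<lambda>j. \<xi> j \<omega>) \<in> borel_measurable M" using W_meas[OF assms(2), where t=0] by simp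
  have "distr M borel (\<lambda>\<omega>. H (\<lambda>j. \<xi> (t + j) \<omega>)) = distr (distr M borel (\<lambda>\<omega>. \<lambda>j. \<xi> (t + j) \<omega>)) borel H"
    using Wt assms(5) by (subst distr_distr) (auto simp: o_def)
  also have "\<dots> = distr (distr M borel (\<lambda>\<omega>. \<lambda>j. \<xi> j \<omega>)) borel H"
    using shift_law[OF assms(1-4)] by simp
  also have "\<dots> = distr M borel (\<lambda>\<omega>. H (\<lambda>j. \<xi> j \<omega>))"
    using W0 assms(5) by (subst distr_distr) (auto simp: o_def)
  finally show ?thesis .
qed

lemma test_fun_cont: "test_fun \<phi> \<Longrightarrow> continuous_on UNIV \<phi>"
  unfolding test_fun_def smooth_fun_def by (metis empty_subsetI list.set(1) pderivs.simps(1))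

lemma cont_div: "continuous_on UNIV \<phi> \<Longrightarrow> continuous_on UNIV (\<lambda>w::complex. \<phi> (w / c))"
proof -
  assume c: "continuous_on UNIV \<phi>"
  have "continuous_on UNIV (\<lambda>w::complex. w * inverse c)" by (intro continuous_intros)
  then have "continuous_on UNIV (\<lambda>w::complex. \<phi> (w * inverse c))"
    by (rule continuous_on_compose2[OF c]) auto
  then show ?thesis by (simp add: divide_inverse)
qed

theorem theorem4:
  fixes M :: "'a measure" and \<xi> :: "nat \<Rightarrow> 'a \<Rightarrow> complex" and m :: nat
  assumes "prob_space M"
    and "\<And>k. \<xi> k \<in> borel_measurable M"
    and "prob_space.indep_vars M (\<lambda>_. borel) \<xi> UNIV"
    and "\<And>k. distr M borel (\<xi> k) = distr M borel (\<xi> 0)"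
    and "\<not> (\<exists>c. measure M {\<omega> \<in> space M. \<xi> 0 \<omega> = c} = 1)"
    and "measure M {\<omega> \<in> space M. \<xi> 0 \<omega> = 0} = 0"
    and "integrable M (\<lambda>\<omega>. ln (1 + cmod (\<xi> 0 \<omega>)))"
    and "0 < m"
  shows "(\<forall>\<phi>. test_fun \<phi> \<longrightarrow> (\<forall>\<epsilon>>0.
            (\<lambda>n. measure M {\<omega> \<in> space M.
               \<bar>zero_integral ((pderiv ^^ (n - m)) (Kpoly (\<lambda>k. \<xi> k \<omega>) n)) \<phi> / real m - \<phi> 0\<bar> > \<epsilon>})
            \<longlonglongrightarrow> 0))
       \<and> (\<forall>\<phi>. test_fun \<phi> \<longrightarrow>
            weak_conv_m
              (\<lambda>n. distr M borel (\<lambda>\<omega>.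
                 zero_integral ((pderiv ^^ (n - m)) (Kpoly (\<lambda>k. \<xi> k \<omega>) n)) (\<lambda>z. \<phi> (of_nat n * z))))
              (distr M borel (\<lambda>\<omega>. zero_integral (fpoly (\<lambda>k. \<xi> k \<omega>) m) \<phi>)))"
proof -
  interpret P: prob_space M by (rule assms(1))
  note xm = assms(2)
  have m0: "m > 0" by (rule assms(8))
  have W0: "(\<lambda>\<omega>. \<lambda>j. \<xi> j \<omega>) \<in> borel_measurable M" using W_meas[OF xm, where t=0] by simp
  have AEm: "AE \<omega> in M. \<xi> m \<omega> \<noteq> 0"
  proof -
    have s: "{\<omega>\<in>space M. \<xi> m \<omega> = 0} \<in> sets M" using xm[of m] by measurable
    have v: "\<xi> k -` {0} \<inter> space M = {\<omega>\<in>space M. \<xi> k \<omega> = 0}" for k by auto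
    have "measure M {\<omega>\<in>space M. \<xi> m \<omega> = 0} = measure (distr M borel (\<xi> m)) {0}"
      using measure_distr[OF xm[of m], of "{0}"] v[of m] by simp
    also have "\<dots> = measure (distr M borel (\<xi> 0)) {0}" by (subst assms(4)[of m]) (rule refl)
    also have "\<dots> = measure M {\<omega>\<in>space M. \<xi> 0 \<omega> = 0}"
      using measure_distr[OF xm[of 0], of "{0}"] v[of 0] by simp
    finally have "measure M {\<omega>\<in>space M. \<xi> m \<omega> = 0} = 0" using assms(6) by simp
    then have "emeasure M {\<omega>\<in>space M. \<xi> m \<omega> = 0} = 0" by (simp add: P.emeasure_eq_measure)
    then show ?thesis by (subst AE_iff_measurable[OF s]) auto
  qed
  have part1: "(\<lambda>n. measure M {\<omega> \<in> space M.
               \<bar>zero_integral ((pderiv ^^ (n - m)) (Kpoly (\<lambda>k. \<xi> k \<omega>) n)) \<phi> / real m - \<phi> 0\<bar> > \<epsilon>})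
            \<longlonglongrightarrow> 0" if tf: "test_fun \<phi>" and eps: "\<epsilon> > 0" for \<phi> \<epsilon>
  proof -
    have c\<phi>: "continuous_on UNIV \<phi>" by (rule test_fun_cont[OF tf])
    have ic: "isCont \<phi> w" for w using c\<phi> by (simp add: continuous_on_eq_continuous_at)
    define H1 where "H1 = (\<lambda>t b. zero_integral (cpoly m (\<lambda>j. b j * Cf m t j)) (\<lambda>w. \<phi> (w / of_nat (t + m))))"
    define Y1 where "Y1 = (\<lambda>t \<omega>. H1 t (\<lambda>j. \<xi> j \<omega>) / real m)"
    have H1m: "H1 t \<in> borel_measurable borel" for t
      unfolding H1_def by (intro H_meas cont_div c\<phi>)
    have Y1m: "Y1 t \<in> borel_measurable M" for t
      unfolding Y1_def using measurable_comp[OF W0 H1m[of t]] by (simp add: o_def)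
    have conv: "AE \<omega> in M. (\<lambda>t. Y1 t \<omega>) \<longlonglongrightarrow> \<phi> 0"
      using AEm
    proof eventually_elim
      case (elim \<omega>)
      have hyp: "(\<lambda>n. \<phi> (z n / of_nat (\<sigma> n + m))) \<longlonglongrightarrow> \<phi> 0"
        if "strict_mono (\<sigma>::nat\<Rightarrow>nat)" "z \<longlonglongrightarrow> w" for \<sigma> z w
      proof -
        have sm: "strict_mono (\<lambda>n. \<sigma> n + m)" using that(1) by (simp add: strict_mono_def)
        have "(\<lambda>n. z n / of_nat (\<sigma> n + m)) \<longlonglongrightarrow> 0"
          by (intro tendsto_divide_0[OF that(2)] filterlim_compose[OF tendsto_of_nat] filterlim_subseq sm)
        then show ?thesis using ic[of 0] by (rule isCont_tendsto_compose[rotated])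
      qed
      have "(\<lambda>t. zero_integral (cpoly m (\<lambda>j. \<xi> j \<omega> * Cf m t j)) (\<lambda>w. \<phi> (w / of_nat (t + m))))
           \<longlonglongrightarrow> zero_integral (cpoly m (\<lambda>j. \<xi> j \<omega> / fact j)) (\<lambda>_. \<phi> 0)"
        by (rule conv_Y[where b="\<lambda>j. \<xi> j \<omega>"]) (use elim m0 hyp in auto)
      moreover have "zero_integral (cpoly m (\<lambda>j. \<xi> j \<omega> / fact j)) (\<lambda>_. \<phi> 0) = real m * \<phi> 0"
        using elim by (subst ZI_const) (auto simp: degree_cpoly cpoly_ne0)
      ultimately have "(\<lambda>t. H1 t (\<lambda>j. \<xi> j \<omega>) / real m) \<longlonglongrightarrow> real m * \<phi> 0 / real m"
        unfolding H1_def using m0 by (intro tendsto_divide) auto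
      then show ?case using m0 by (simp add: Y1_def)
    qed
    have lim: "(\<lambda>t. measure M {\<omega>\<in>space M. \<bar>Y1 t \<omega> - \<phi> 0\<bar> > \<epsilon>}) \<longlonglongrightarrow> 0"
      by (rule as_to_prob[OF assms(1) Y1m conv eps])
    define S where "S = {x::real. \<epsilon> < \<bar>x / real m - \<phi> 0\<bar>}"
    have Ss: "S \<in> sets borel" unfolding S_def using m0
      by (intro borel_open open_Collect_less continuous_intros) auto
    have key: "zero_integral ((pderiv ^^ (t + m - m)) (Kpoly (\<lambda>k. \<xi> k \<omega>) (t + m))) \<phi>
        = H1 t (\<lambda>j. \<xi> (t + j) \<omega>)" for t \<omega>
    proof -
      have "(\<lambda>z. \<phi> (of_nat (t + m) * z / of_nat (t + m))) = \<phi>"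
        using m0 of_nat_eq_0_iff[of "t+m"] by (auto simp del: of_nat_add)
      then show ?thesis
        using key_scale[OF m0, where t=t and a="\<lambda>k. \<xi> k \<omega>" and g="\<lambda>w. \<phi> (w / of_nat (t + m))"]
        by (simp add: H1_def)
    qed
    have eqm: "measure M {\<omega> \<in> space M. \<bar>zero_integral ((pderiv ^^ (t + m - m)) (Kpoly (\<lambda>k. \<xi> k \<omega>) (t + m))) \<phi>
               / real m - \<phi> 0\<bar> > \<epsilon>} = measure M {\<omega>\<in>space M. \<bar>Y1 t \<omega> - \<phi> 0\<bar> > \<epsilon>}" for t
    proof -
      have Ht: "(\<lambda>\<omega>. H1 t (\<lambda>j. \<xi> (t + j) \<omega>)) \<in> borel_measurable M"
        using measurable_comp[OF W_meas[OF xm, where t=t] H1m[of t]] by (simp add: o_def)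
      have H0: "(\<lambda>\<omega>. H1 t (\<lambda>j. \<xi> j \<omega>)) \<in> borel_measurable M"
        using measurable_comp[OF W0 H1m[of t]] by (simp add: o_def)
      have "measure M {\<omega> \<in> space M. \<bar>zero_integral ((pderiv ^^ (t + m - m)) (Kpoly (\<lambda>k. \<xi> k \<omega>) (t + m))) \<phi>
               / real m - \<phi> 0\<bar> > \<epsilon>} = measure M ((\<lambda>\<omega>. H1 t (\<lambda>j. \<xi> (t + j) \<omega>)) -` S \<inter> space M)"
        unfolding key by (intro arg_cong[where f="measure M"]) (auto simp: S_def)
      also have "\<dots> = measure (distr M borel (\<lambda>\<omega>. H1 t (\<lambda>j. \<xi> (t + j) \<omega>))) S"
        by (rule measure_distr[symmetric, OF Ht Ss])
      also have "\<dots> = measure (distr M borel (\<lambda>\<omega>. H1 t (\<lambda>j. \<xi> j \<omega>))) S"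
        by (subst law_eq[OF assms(1-4) H1m]) (rule refl)
      also have "\<dots> = measure M ((\<lambda>\<omega>. H1 t (\<lambda>j. \<xi> j \<omega>)) -` S \<inter> space M)"
        by (rule measure_distr[OF H0 Ss])
      also have "\<dots> = measure M {\<omega>\<in>space M. \<bar>Y1 t \<omega> - \<phi> 0\<bar> > \<epsilon>}"
        by (intro arg_cong[where f="measure M"]) (auto simp: S_def Y1_def)
      finally show ?thesis .
    qed
    show ?thesis
      by (rule LIMSEQ_offset[where k=m]) (unfold eqm, rule lim)
  qed
  have part2: "weak_conv_m
              (\<lambda>n. distr M borel (\<lambda>\<omega>.
                 zero_integral ((pderiv ^^ (n - m)) (Kpoly (\<lambda>k. \<xi> k \<omega>) n)) (\<lambda>z. \<phi> (of_nat n * z))))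
              (distr M borel (\<lambda>\<omega>. zero_integral (fpoly (\<lambda>k. \<xi> k \<omega>) m) \<phi>))" if tf: "test_fun \<phi>" for \<phi>
  proof -
    have c\<phi>: "continuous_on UNIV \<phi>" by (rule test_fun_cont[OF tf])
    have ic: "isCont \<phi> w" for w using c\<phi> by (simp add: continuous_on_eq_continuous_at)
    define H2 where "H2 = (\<lambda>t b. zero_integral (cpoly m (\<lambda>j. b j * Cf m t j)) \<phi>)"
    define Y2 where "Y2 = (\<lambda>t \<omega>. H2 t (\<lambda>j. \<xi> j \<omega>))"
    define Z where "Z = (\<lambda>\<omega>. zero_integral (fpoly (\<lambda>k. \<xi> k \<omega>) m) \<phi>)"
    have H2m: "H2 t \<in> borel_measurable borel" for t
      unfolding H2_def by (intro H_meas c\<phi>)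
    have Y2m: "Y2 t \<in> borel_measurable M" for t
      unfolding Y2_def using measurable_comp[OF W0 H2m[of t]] by (simp add: o_def)
    have Zeq: "Z = (\<lambda>\<omega>. zero_integral (cpoly m (\<lambda>j. \<xi> j \<omega> * (1 / fact j))) \<phi>)"
      by (simp add: Z_def fpoly_cpoly)
    have Zm: "Z \<in> borel_measurable M"
      unfolding Zeq using measurable_comp[OF W0 H_meas[OF c\<phi>, of m "\<lambda>j. 1 / fact j"]] by (simp add: o_def)
    have conv: "AE \<omega> in M. (\<lambda>t. Y2 t \<omega>) \<longlonglongrightarrow> Z \<omega>"
      using AEm
    proof eventually_elim
      case (elim \<omega>)
      have "(\<lambda>t. zero_integral (cpoly m (\<lambda>j. \<xi> j \<omega> * Cf m t j)) \<phi>)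
           \<longlonglongrightarrow> zero_integral (cpoly m (\<lambda>j. \<xi> j \<omega> / fact j)) \<phi>"
        by (rule conv_Y[where b="\<lambda>j. \<xi> j \<omega>" and \<psi>="\<lambda>_. \<phi>"])
          (use elim m0 ic in \<open>auto intro: isCont_tendsto_compose\<close>)
      then show ?case by (simp add: Y2_def H2_def Z_def fpoly_cpoly)
    qed
    have wc: "weak_conv_m (\<lambda>t. distr M borel (Y2 t)) (distr M borel Z)"
      by (rule as_to_weak[OF assms(1) Y2m Zm conv])
    have law: "distr M borel (\<lambda>\<omega>. zero_integral ((pderiv ^^ (t + m - m)) (Kpoly (\<lambda>k. \<xi> k \<omega>) (t + m)))
                 (\<lambda>z. \<phi> (of_nat (t + m) * z))) = distr M borel (Y2 t)" for t
    proof -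
      have "(\<lambda>\<omega>. zero_integral ((pderiv ^^ (t + m - m)) (Kpoly (\<lambda>k. \<xi> k \<omega>) (t + m)))
                 (\<lambda>z. \<phi> (of_nat (t + m) * z))) = (\<lambda>\<omega>. H2 t (\<lambda>j. \<xi> (t + j) \<omega>))"
      proof (rule ext)
        fix \<omega>
        show "zero_integral ((pderiv ^^ (t + m - m)) (Kpoly (\<lambda>k. \<xi> k \<omega>) (t + m)))
                 (\<lambda>z. \<phi> (of_nat (t + m) * z)) = H2 t (\<lambda>j. \<xi> (t + j) \<omega>)"
          using key_scale[OF m0, where t=t and a="\<lambda>k. \<xi> k \<omega>" and g=\<phi>] by (simp add: H2_def)
      qed
      then show ?thesis using law_eq[OF assms(1-4) H2m[of t], where t=t] by (simp add: Y2_def)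
    qed
    show ?thesis
      unfolding weak_conv_m_def weak_conv_def
    proof (intro allI impI)
      fix x assume "isCont (cdf (distr M borel (\<lambda>\<omega>. zero_integral (fpoly (\<lambda>k. \<xi> k \<omega>) m) \<phi>))) x"
      then have "(\<lambda>t. cdf (distr M borel (Y2 t)) x) \<longlonglongrightarrow> cdf (distr M borel Z) x"
        using wc unfolding weak_conv_m_def weak_conv_def Z_def by blast
      then have "(\<lambda>t. cdf (distr M borel (\<lambda>\<omega>. zero_integral ((pderiv ^^ (t + m - m)) (Kpoly (\<lambda>k. \<xi> k \<omega>) (t + m)))
                 (\<lambda>z. \<phi> (of_nat (t + m) * z)))) x) \<longlonglongrightarrow> cdf (distr M borel (\<lambda>\<omega>. zero_integral (fpoly (\<lambda>k. \<xi> k \<omega>) m) \<phi>)) x"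
        by (simp only: law Z_def)
      then show "(\<lambda>n. cdf (distr M borel (\<lambda>\<omega>. zero_integral ((pderiv ^^ (n - m)) (Kpoly (\<lambda>k. \<xi> k \<omega>) n))
                 (\<lambda>z. \<phi> (of_nat n * z)))) x) \<longlonglongrightarrow> cdf (distr M borel (\<lambda>\<omega>. zero_integral (fpoly (\<lambda>k. \<xi> k \<omega>) m) \<phi>)) x"
        by (rule LIMSEQ_offset)
    qed
  qed
  show ?thesis using part1 part2 by (intro conjI allI impI) auto
qed

end
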